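(* For all integers $k\ge1$ and $d\ge1$, $M_k(d)\ge M'_k(d)$, where \[M'_k(d):=\max\Big\{\prod_{i=1}^s m_{k_i}(d_i)\ :\ s\ge1,\ \sum_{i=1}^s k_i=k,\ \sum_{i=1}^s d_i=d\Big\},\] the maximum taken over positive integers $k_i$ and nonnegative integers $d_i$.
   Context: A set is separated if any two distinct points are at distance at least $1$. $m_k(d)$ is the maximum cardinality of a set in $\mathbb{R}^d$ determining at most $k$ distinct distances ($m_k(0)=1$). For $\varepsilon>0$, a separated set $P$ is an $\varepsilon$-nearly $k$-distance set (with distances $1\le t_1<\dots<t_k$) if $\|p_1-p_2\|\in\bigcup_{i=1}^k[t_i,t_i+\varepsilon]$ for all distinct $p_1,p_2\in P$. $M_k(d)$ is the largest $M$ such that for every $\varepsilon>0$ there exists an $\varepsilon$-nearly $k$-distance set in $\mathbb{R}^d$ of cardinality $M$. *)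

theory Defs
  imports Complex_Main "HOL-Library.Extended_Nat"
begin

text \<open>Points of R^d are represented as functions nat => real vanishing outside {..<d}.\<close>

definition Rd :: "nat \<Rightarrow> (nat \<Rightarrow> real) set" where
  "Rd d = {x. \<forall>i\<ge>d. x i = 0}"

definition edist :: "nat \<Rightarrow> (nat \<Rightarrow> real) \<Rightarrow> (nat \<Rightarrow> real) \<Rightarrow> real" where
  "edist d x y = sqrt (\<Sum>i<d. (x i - y i)^2)"

definition distances :: "nat \<Rightarrow> (nat \<Rightarrow> real) set \<Rightarrow> real set" where
  "distances d P = {edist d p q | p q. p \<in> P \<and> q \<in> P \<and> p \<noteq> q}"

definition m_k :: "nat \<Rightarrow> nat \<Rightarrow> enat" where
  "m_k k d = Sup {enat (card P) | P. P \<subseteq> Rd d \<and> finite P \<and> card (distances d P) \<le> k}"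

definition separated :: "nat \<Rightarrow> (nat \<Rightarrow> real) set \<Rightarrow> bool" where
  "separated d P \<longleftrightarrow> (\<forall>p\<in>P. \<forall>q\<in>P. p \<noteq> q \<longrightarrow> edist d p q \<ge> 1)"

definition nearly_k_distance :: "real \<Rightarrow> nat \<Rightarrow> nat \<Rightarrow> (nat \<Rightarrow> real) set \<Rightarrow> bool" where
  "nearly_k_distance \<epsilon> k d P \<longleftrightarrow> P \<subseteq> Rd d \<and> separated d P \<and>
     (\<exists>t :: nat \<Rightarrow> real. (k > 0 \<longrightarrow> 1 \<le> t 0) \<and> (\<forall>i j. i < j \<and> j < k \<longrightarrow> t i < t j) \<and>
        (\<forall>p\<in>P. \<forall>q\<in>P. p \<noteq> q \<longrightarrow> (\<exists>i<k. t i \<le> edist d p q \<and> edist d p q \<le> t i + \<epsilon>)))"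

definition M_k :: "nat \<Rightarrow> nat \<Rightarrow> enat" where
  "M_k k d = Sup {enat M | M. \<forall>\<epsilon>>0. \<exists>P. finite P \<and> card P = M \<and> nearly_k_distance \<epsilon> k d P}"

definition M_prime_k :: "nat \<Rightarrow> nat \<Rightarrow> enat" where
  "M_prime_k k d = Sup {(\<Prod>i<s. m_k (ks i) (ds i)) | (s::nat) (ks::nat\<Rightarrow>nat) (ds::nat\<Rightarrow>nat). s \<ge> 1 \<and> (\<forall>i<s. ks i \<ge> 1)
       \<and> (\<Sum>i<s. ks i) = k \<and> (\<Sum>i<s. ds i) = d}"

end

theory Submission
  imports Defs
begin

definition G :: "nat \<Rightarrow> nat \<Rightarrow> nat \<Rightarrow> bool" where
  "G k d N \<longleftrightarrow> (\<forall>\<epsilon>>0. \<exists>P. finite P \<and> card P = N \<and> nearly_k_distance \<epsilon> k d P)"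

definition E :: "nat \<Rightarrow> nat \<Rightarrow> (nat \<Rightarrow> real) set \<Rightarrow> bool" where
  "E k d P \<longleftrightarrow> P \<subseteq> Rd d \<and> finite P \<and> card (distances d P) \<le> k"

definition emb :: "nat \<Rightarrow> real \<Rightarrow> (nat \<Rightarrow> real) \<Rightarrow> (nat \<Rightarrow> real) \<Rightarrow> (nat \<Rightarrow> real)" where
  "emb d1 lam a b = (\<lambda>i. if i < d1 then a i else lam * b (i - d1))"

lemma edist_nonneg: "edist d x y \<ge> 0"
  unfolding edist_def by (simp add: sum_nonneg)

lemma edist_sq: "(edist d x y)^2 = (\<Sum>i<d. (x i - y i)^2)"
  unfolding edist_def by (simp add: sum_nonneg)

lemma edist_pos: assumes "x \<in> Rd d" "y \<in> Rd d" "x \<noteq> y" shows "edist d x y > 0"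
proof -
  obtain i where i: "x i \<noteq> y i" using assms(3) by auto
  with assms have "i < d" unfolding Rd_def by (metis (mono_tags, lifting) mem_Collect_eq not_less)
  hence "(x i - y i)^2 \<le> (\<Sum>i<d. (x i - y i)^2)"
    by (intro member_le_sum) auto
  moreover have "(x i - y i)^2 > 0" using i by simp
  ultimately have "(edist d x y)^2 > 0" unfolding edist_sq by linarith
  thus ?thesis using edist_nonneg[of d x y] by (cases "edist d x y = 0") auto
qed

lemma edist_emb_sum:
  "(\<Sum>i<d1+d2. (emb d1 lam a b i - emb d1 lam a' b' i)^2)
    = (\<Sum>i<d1. (a i - a' i)^2) + lam^2 * (\<Sum>i<d2. (b i - b' i)^2)"
proof (induction d2)
  case 0
  then show ?case by (auto simp: emb_def intro!: sum.cong)
next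
  case (Suc d2)
  then show ?case by (simp add: emb_def algebra_simps power2_eq_square)
qed

lemma edist_emb:
  "edist (d1+d2) (emb d1 lam a b) (emb d1 lam a' b')
    = sqrt ((edist d1 a a')^2 + lam^2 * (edist d2 b b')^2)"
  unfolding edist_sq by (simp add: edist_def edist_emb_sum)


lemma sqrt_bound:
  fixes X x :: real
  assumes "x > 0" "X \<ge> 0"
  shows "x \<le> sqrt (X + x^2)" "sqrt (X + x^2) \<le> x + X / x"
proof -
  have "sqrt (x^2) \<le> sqrt (X + x^2)" using assms by (intro real_sqrt_le_mono) auto
  thus "x \<le> sqrt (X + x^2)" using assms by simp
  have "(x + X/x)^2 = x^2 + 2*X + (X/x)^2" using assms
    by (simp add: power2_eq_square field_simps)
  also have "\<dots> \<ge> X + x^2" using assms by simp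
  finally have "sqrt (X + x^2) \<le> sqrt ((x + X/x)^2)" by (intro real_sqrt_le_mono) auto
  thus "sqrt (X + x^2) \<le> x + X / x" using assms by simp
qed

lemma step:
  assumes G: "G k1 d1 N" and E: "E k2 d2 B"
  shows "G (k1+k2) (d1+d2) (N * card B)"
  unfolding G_def
proof (intro allI impI)
  fix \<epsilon> :: real assume \<epsilon>: "\<epsilon> > 0"
  from G \<epsilon> obtain A where A: "finite A" "card A = N" "nearly_k_distance \<epsilon> k1 d1 A"
    unfolding G_def by blast
  from A(3) obtain t' where Asub: "A \<subseteq> Rd d1" and Asep: "separated d1 A"
    and t'1: "k1 > 0 \<longrightarrow> 1 \<le> t' 0" and t'mono: "\<forall>i j. i<j \<and> j<k1 \<longrightarrow> t' i < t' j"
    and t'cov: "\<forall>p\<in>A. \<forall>q\<in>A. p\<noteq>q \<longrightarrow> (\<exists>i<k1. t' i \<le> edist d1 p q \<and> edist d1 p q \<le> t' i + \<epsilon>)"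
    unfolding nearly_k_distance_def by blast
  from E have Bsub: "B \<subseteq> Rd d2" and Bfin: "finite B" and Bk: "card (distances d2 B) \<le> k2"
    unfolding E_def by auto
  define DB where "DB = distances d2 B"
  have "DB \<subseteq> (\<lambda>(p,q). edist d2 p q) ` (B \<times> B)" unfolding DB_def distances_def by auto
  then have DBfin: "finite DB" by (rule finite_subset) (simp add: Bfin)
  have DBpos: "\<forall>x\<in>DB. x > 0" unfolding DB_def distances_def
    using Bsub edist_pos by blast
  define \<delta> where "\<delta> = (if DB = {} then 1 else Min DB)"
  have \<delta>pos: "\<delta> > 0" unfolding \<delta>_def using DBpos DBfin Min_in by auto
  have \<delta>le: "\<forall>x\<in>DB. \<delta> \<le> x" unfolding \<delta>_def using DBfin by auto
  define R where "R = Max (insert 0 ((\<lambda>(p,q). edist d1 p q) ` (A \<times> A)))"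
  have Rb: "\<forall>p\<in>A. \<forall>q\<in>A. edist d1 p q \<le> R" unfolding R_def
    using A(1) by (auto intro!: Max_ge)
  have R0: "R \<ge> 0" unfolding R_def using A(1) by (auto intro!: Max_ge)
  define T where "T = \<bar>t' (k1 - 1)\<bar>"
  define L where "L = 2 + T + R^2/\<epsilon>"
  have L2: "L \<ge> 2" unfolding L_def T_def using \<epsilon> by auto
  have LT: "T < L" unfolding L_def using \<epsilon> by (simp add: add_pos_nonneg)
  define lam where "lam = L/\<delta>"
  have lampos: "lam > 0" unfolding lam_def using L2 \<delta>pos by auto
  have lamd: "lam * \<delta> = L" unfolding lam_def using \<delta>pos by auto
  have key: "R^2 / L \<le> \<epsilon>"
  proof -
    have "R^2 = \<epsilon> * (R^2/\<epsilon>)" using \<epsilon> by simp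
    also have "\<dots> \<le> \<epsilon> * L" using \<epsilon> unfolding L_def T_def
      by (intro mult_left_mono) auto
    finally show ?thesis using L2 by (simp add: divide_le_eq mult.commute)
  qed
  define xs where "xs = sorted_list_of_set ((\<lambda>x. lam * x) ` DB)"
  have xs_set: "set xs = (\<lambda>x. lam*x) ` DB" by (simp add: xs_def DBfin)
  have xs_sorted: "sorted_wrt (<) xs" unfolding xs_def by (rule strict_sorted_list_of_set)
  have xs_len: "length xs \<le> k2"
  proof -
    have "length xs = card ((\<lambda>x. lam * x) ` DB)" by (simp add: xs_def)
    also have "\<dots> \<le> card DB" by (rule card_image_le[OF DBfin])
    finally show ?thesis using Bk DB_def by simp
  qed
  have xs_ge: "\<forall>x\<in>set xs. L \<le> x"
  proof
    fix x assume "x \<in> set xs"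
    then obtain y where y: "y \<in> DB" "x = lam * y" using xs_set by auto
    have "lam * \<delta> \<le> lam * y" using \<delta>le y(1) lampos by (intro mult_left_mono) auto
    thus "L \<le> x" using lamd y by simp
  qed
  define C where "C = T + 1 + Max (insert 0 (set xs))"
  have xs_C: "\<forall>x\<in>set xs. x < C"
  proof
    fix x assume "x \<in> set xs"
    hence "x \<le> Max (insert 0 (set xs))" by (intro Max_ge) auto
    thus "x < C" unfolding C_def T_def by simp
  qed
  have C1: "C \<ge> T + 1" unfolding C_def by (simp add: Max_ge)
  have t'le: "t' i \<le> T" if "i < k1" for i
  proof (cases "i = k1 - 1")
    case True then show ?thesis unfolding T_def by simp
  next
    case False
    then have "t' i < t' (k1 - 1)" using t'mono that by auto
    then show ?thesis unfolding T_def by simp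
  qed
  define t where "t i = (if i < k1 then t' i else if i - k1 < length xs then xs ! (i - k1) else C + real i)" for i
  define P where "P = (\<lambda>(a,b). emb d1 lam a b) ` (A \<times> B)"
  have inj: "inj_on (\<lambda>(a,b). emb d1 lam a b) (A \<times> B)"
  proof (rule inj_onI, clarify)
    fix a b a' b' assume a: "a \<in> A" "b \<in> B" "a' \<in> A" "b' \<in> B"
      and eq: "emb d1 lam a b = emb d1 lam a' b'"
    show "a = a' \<and> b = b'"
    proof
      show "a = a'"
      proof
        fix i show "a i = a' i"
        proof (cases "i < d1")
          case True then show ?thesis using fun_cong[OF eq, of i] by (simp add: emb_def)
        next
          case False
          have "a \<in> Rd d1" "a' \<in> Rd d1" using a Asub by auto
          then show ?thesis using False unfolding Rd_def by simp
        qed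
      qed
      show "b = b'"
      proof
        fix i show "b i = b' i"
          using fun_cong[OF eq, of "i + d1"] lampos by (simp add: emb_def)
      qed
    qed
  qed
  have Pfin: "finite P" unfolding P_def using A(1) Bfin by simp
  have Pcard: "card P = N * card B" unfolding P_def
    using card_image[OF inj] A(2) by (simp add: card_cartesian_product)
  have Psub: "P \<subseteq> Rd (d1+d2)"
  proof
    fix p assume "p \<in> P"
    then obtain a b where ab: "a \<in> A" "b \<in> B" "p = emb d1 lam a b" unfolding P_def by auto
    show "p \<in> Rd (d1+d2)" unfolding Rd_def
    proof (clarify)
      fix i assume "d1 + d2 \<le> i"
      then show "p i = 0" using ab Bsub unfolding Rd_def emb_def by auto
    qed
  qed
  have sameb: "edist (d1+d2) (emb d1 lam a b) (emb d1 lam a' b) = edist d1 a a'" for a a' b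
    using edist_emb[of d1 d2 lam a b a' b] edist_nonneg[of d1 a a'] by (simp add: edist_def)
  have diffb: "lam * edist d2 b b' \<in> set xs \<and>
      lam * edist d2 b b' \<le> edist (d1+d2) (emb d1 lam a b) (emb d1 lam a' b') \<and>
      edist (d1+d2) (emb d1 lam a b) (emb d1 lam a' b') \<le> lam * edist d2 b b' + \<epsilon>"
    if ab: "a \<in> A" "a' \<in> A" "b \<in> B" "b' \<in> B" "b \<noteq> b'" for a a' b b'
  proof -
    define x where "x = lam * edist d2 b b'"
    define X where "X = (edist d1 a a')^2"
    have inDB: "edist d2 b b' \<in> DB" unfolding DB_def distances_def using ab by auto
    then have xin: "x \<in> set xs" unfolding x_def xs_set by auto
    then have xL: "x \<ge> L" using xs_ge by auto
    have X0: "X \<ge> 0" unfolding X_def by simp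
    have XR: "X \<le> R^2" unfolding X_def using Rb ab edist_nonneg
      by (intro power_mono) auto
    have eqd: "edist (d1+d2) (emb d1 lam a b) (emb d1 lam a' b') = sqrt (X + x^2)"
      unfolding edist_emb X_def x_def by (simp add: power_mult_distrib)
    have "X / x \<le> R^2 / L" using xL L2 XR X0 by (intro frac_le) auto
    then have "X / x \<le> \<epsilon>" using key by simp
    then show ?thesis using sqrt_bound[of x X] xL L2 X0 xin eqd unfolding x_def by auto
  qed
  have nk: "nearly_k_distance \<epsilon> (k1+k2) (d1+d2) P"
    unfolding nearly_k_distance_def
  proof (intro conjI exI[of _ t])
    show "P \<subseteq> Rd (d1 + d2)" by (rule Psub)
    show "separated (d1 + d2) P" unfolding separated_def
    proof (intro ballI impI)
      fix p q assume pq: "p \<in> P" "q \<in> P" "p \<noteq> q"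
      then obtain a b a' b' where ab: "a \<in> A" "b \<in> B" "p = emb d1 lam a b"
        "a' \<in> A" "b' \<in> B" "q = emb d1 lam a' b'" unfolding P_def by auto
      show "1 \<le> edist (d1 + d2) p q"
      proof (cases "b = b'")
        case True
        then have "a \<noteq> a'" using pq ab by auto
        then show ?thesis using True sameb Asep ab unfolding separated_def by auto
      next
        case False
        then show ?thesis using diffb[OF ab(1) ab(4) ab(2) ab(5) False] xs_ge L2 ab by force
      qed
    qed
    show "0 < k1 + k2 \<longrightarrow> 1 \<le> t 0"
    proof
      assume "0 < k1 + k2"
      show "1 \<le> t 0"
      proof (cases "k1 > 0")
        case True then show ?thesis using t'1 unfolding t_def by simp
      next
        case False
        show ?thesis
        proof (cases "0 < length xs")
          case True
          then have "xs ! 0 \<in> set xs" by simp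
          moreover have "t 0 = xs ! 0" using False True unfolding t_def by simp
          ultimately show ?thesis using xs_ge L2 by fastforce
        next
          case F2: False
          then show ?thesis using False C1 unfolding t_def T_def by simp
        qed
      qed
    qed
    show "\<forall>i j. i < j \<and> j < k1 + k2 \<longrightarrow> t i < t j"
    proof (intro allI impI, elim conjE)
      fix i j assume ij: "i < j" "j < k1 + k2"
      show "t i < t j"
      proof (cases "j < k1")
        case True then show ?thesis using ij t'mono unfolding t_def by auto
      next
        case jk: False
        show ?thesis
        proof (cases "j - k1 < length xs")
          case jx: True
          then have xj: "xs ! (j - k1) \<in> set xs" by simp
          show ?thesis
          proof (cases "i < k1")
            case True
            then have "t' i \<le> T" by (rule t'le)
            moreover have "L \<le> xs ! (j - k1)" using xj xs_ge by blast
            ultimately show ?thesis using True jk jx LT unfolding t_def by simp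
          next
            case False
            then have "i - k1 < j - k1" using ij by auto
            then have "xs ! (i - k1) < xs ! (j - k1)" using xs_sorted jx
              by (intro sorted_wrt_nth_less) auto
            then show ?thesis using False jk jx ij unfolding t_def by auto
          qed
        next
          case jx: False
          show ?thesis
          proof (cases "i < k1")
            case True
            then have "t' i \<le> T" by (rule t'le)
            then show ?thesis using True jk jx C1 unfolding t_def by simp
          next
            case ik: False
            show ?thesis
            proof (cases "i - k1 < length xs")
              case True
              then have "xs ! (i - k1) \<in> set xs" by simp
              then have "xs ! (i - k1) < C" using xs_C by auto
              then show ?thesis using ik jk jx True unfolding t_def by simp
            next
              case False
              then show ?thesis using ik jk jx ij unfolding t_def by simp
            qed
          qed
        qed
      qed
    qed
    show "\<forall>p\<in>P. \<forall>q\<in>P. p \<noteq> q \<longrightarrow> (\<exists>i<k1 + k2. t i \<le> edist (d1 + d2) p q \<and> edist (d1 + d2) p q \<le> t i + \<epsilon>)"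
    proof (intro ballI impI)
      fix p q assume pq: "p \<in> P" "q \<in> P" "p \<noteq> q"
      then obtain a b a' b' where ab: "a \<in> A" "b \<in> B" "p = emb d1 lam a b"
        "a' \<in> A" "b' \<in> B" "q = emb d1 lam a' b'" unfolding P_def by auto
      show "\<exists>i<k1 + k2. t i \<le> edist (d1 + d2) p q \<and> edist (d1 + d2) p q \<le> t i + \<epsilon>"
      proof (cases "b = b'")
        case True
        then have "a \<noteq> a'" using pq ab by auto
        then obtain i where i: "i < k1" "t' i \<le> edist d1 a a'" "edist d1 a a' \<le> t' i + \<epsilon>"
          using t'cov ab by blast
        show ?thesis
          by (rule exI[of _ i]) (use i True ab sameb in \<open>simp add: t_def\<close>)
      next
        case False
        note D = diffb[OF ab(1) ab(4) ab(2) ab(5) False]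
        then obtain j where j: "j < length xs" "xs ! j = lam * edist d2 b b'"
          by (metis in_set_conv_nth)
        have "k1 + j < k1 + k2" using j xs_len by simp
        moreover have "t (k1 + j) = lam * edist d2 b b'" using j unfolding t_def by simp
        ultimately show ?thesis using D ab by metis
      qed
    qed
  qed
  show "\<exists>P. finite P \<and> card P = N * card B \<and> nearly_k_distance \<epsilon> (k1 + k2) (d1 + d2) P"
    using Pfin Pcard nk by blast
qed


lemma G_base: "G 0 0 1"
  unfolding G_def
proof (intro allI impI)
  fix \<epsilon> :: real assume "\<epsilon> > 0"
  have "nearly_k_distance \<epsilon> 0 0 {\<lambda>_. 0}"
    unfolding nearly_k_distance_def separated_def Rd_def by auto
  then show "\<exists>P. finite P \<and> card P = 1 \<and> nearly_k_distance \<epsilon> 0 0 P"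
    by (intro exI[of _ "{\<lambda>_. 0}"]) auto
qed

lemma G_iter:
  "(\<forall>i<(s::nat). E (ks i) (ds i) (P i)) \<Longrightarrow> G (\<Sum>i<s. ks i) (\<Sum>i<s. ds i) (\<Prod>i<s. card (P i))"
proof (induction s)
  case 0
  then show ?case using G_base by simp
next
  case (Suc s)
  then have "G (\<Sum>i<s. ks i) (\<Sum>i<s. ds i) (\<Prod>i<s. card (P i))" by simp
  moreover have "E (ks s) (ds s) (P s)" using Suc.prems by simp
  ultimately show ?case using step by simp
qed

lemma G_le: "G k d N \<Longrightarrow> enat N \<le> M_k k d"
  unfolding M_k_def G_def by (intro Sup_upper) auto

lemma m_k_get:
  assumes "enat n \<le> m_k k d"
  shows "\<exists>P. E k d P \<and> n \<le> card P"
proof (cases "n = 0")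
  case True
  then show ?thesis by (intro exI[of _ "{}"]) (auto simp: E_def distances_def)
next
  case False
  then have "enat (n - 1) < m_k k d" using assms
    by (metis diff_less enat_ord_simps(2) less_le_trans not_gr_zero zero_less_one)
  then obtain y where y: "y \<in> {enat (card P) | P. P \<subseteq> Rd d \<and> finite P \<and> card (distances d P) \<le> k}"
    "enat (n - 1) < y" unfolding m_k_def less_Sup_iff by blast
  then obtain P where "P \<subseteq> Rd d" "finite P" "card (distances d P) \<le> k" "y = enat (card P)" by blast
  then show ?thesis using y(2) False unfolding E_def by (intro exI[of _ P]) auto
qed

lemma prod_enat: "(\<Prod>i<(s::nat). enat (f i)) = enat (\<Prod>i<s. f i)"
  by (induction s) (auto simp: one_enat_def)

lemma m_k_ge1: "1 \<le> m_k k d"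
proof -
  have dz: "distances d {\<lambda>_. 0::real} = {}" unfolding distances_def by auto
  have "enat (card {\<lambda>_. 0::real}) \<in> {enat (card P) | P. P \<subseteq> Rd d \<and> finite P \<and> card (distances d P) \<le> k}"
    using dz by (intro CollectI exI[of _ "{\<lambda>_. 0::real}"]) (auto simp: Rd_def)
  then have "enat (card {\<lambda>_. 0::real}) \<le> m_k k d" unfolding m_k_def by (rule Sup_upper)
  then show ?thesis by (simp add: one_enat_def)
qed

theorem proposition1:
  fixes k d :: nat
  assumes "k \<ge> 1" and "d \<ge> 1"
  shows "M_k k d \<ge> M_prime_k k d"
  unfolding M_prime_k_def
proof (rule Sup_least)
  fix x assume "x \<in> {(\<Prod>i<s. m_k (ks i) (ds i)) | (s::nat) (ks::nat\<Rightarrow>nat) (ds::nat\<Rightarrow>nat). s \<ge> 1 \<and> (\<forall>i<s. ks i \<ge> 1)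
       \<and> (\<Sum>i<s. ks i) = k \<and> (\<Sum>i<s. ds i) = d}"
  then obtain s :: nat and ks ds :: "nat \<Rightarrow> nat" where x: "x = (\<Prod>i<s. m_k (ks i) (ds i))"
    and sums: "(\<Sum>i<s. ks i) = k" "(\<Sum>i<s. ds i) = d" by blast
  show "x \<le> M_k k d" unfolding x
  proof -
  have C: "enat (\<Prod>i<s. c i) \<le> M_k k d" if c: "\<forall>i<s. enat (c i) \<le> m_k (ks i) (ds i)" for c
  proof -
    have "\<forall>i\<in>{..<s}. \<exists>P. E (ks i) (ds i) P \<and> c i \<le> card P" using c m_k_get by auto
    then obtain P where P: "\<forall>i\<in>{..<s}. E (ks i) (ds i) (P i) \<and> c i \<le> card (P i)"
      by metis
    then have "G k d (\<Prod>i<s. card (P i))" using G_iter[of s ks ds P] sums by auto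
    then have "enat (\<Prod>i<s. card (P i)) \<le> M_k k d" by (rule G_le)
    moreover have "(\<Prod>i<s. c i) \<le> (\<Prod>i<s. card (P i))" using P by (intro prod_mono) auto
    ultimately show ?thesis by (meson enat_ord_simps(1) order_trans)
  qed
  show "(\<Prod>i<s. m_k (ks i) (ds i)) \<le> M_k k d"
  proof (cases "M_k k d")
    case infinity
    then show ?thesis by simp
  next
    case (enat K)
    have fin: "m_k (ks j) (ds j) \<noteq> \<infinity>" if j: "j < s" for j
    proof
      assume inf: "m_k (ks j) (ds j) = \<infinity>"
      define c where "c i = (if i = j then K + 1 else 1)" for i
      have "\<forall>i<s. enat (c i) \<le> m_k (ks i) (ds i)"
      proof (intro allI impI)
        fix i assume "i < s"
        show "enat (c i) \<le> m_k (ks i) (ds i)"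
        proof (cases "i = j")
          case True then show ?thesis using inf by simp
        next
          case False
          have "1 \<le> m_k (ks i) (ds i)" by (rule m_k_ge1)
          then show ?thesis using False by (simp add: c_def one_enat_def)
        qed
      qed
      then have "enat (\<Prod>i<s. c i) \<le> M_k k d" by (rule C)
      moreover have "(\<Prod>i<s. c i) = K + 1" unfolding c_def using j
        by (simp add: prod.If_cases Int_absorb1)
      ultimately show False using enat by simp
    qed
    define c where "c i = the_enat (m_k (ks i) (ds i))" for i
    have ce: "\<forall>i<s. enat (c i) = m_k (ks i) (ds i)" using fin unfolding c_def by (metis enat.exhaust the_enat.simps)
    then have "(\<Prod>i<s. m_k (ks i) (ds i)) = (\<Prod>i<s. enat (c i))" by simp
    also have "\<dots> = enat (\<Prod>i<s. c i)" by (rule prod_enat)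
    also have "\<dots> \<le> M_k k d" using C ce by simp
    finally show ?thesis .
  qed
  qed
qed

end
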